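(* Let $T$ be a semigroup with identity acting by continuous surjections on compact metrizable spaces $X$ and $Y$, giving dynamical systems $(X,\alpha,T)$ and $(Y,\beta,T)$, and suppose $(Y,\beta,T)$ is a factor of $(X,\alpha,T)$. If $E(X,T)$ is completely regular then $E(Y,T)$ is completely regular.
   Context: A factor map is a continuous surjection $\pi:X\to Y$ with $\pi\circ\alpha^t=\beta^t\circ\pi$ for all $t$; $(Y,\beta,T)$ is a factor if such a map exists. $E(X,T)$ is the closure of $\{\alpha^t:t\in T\}$ in $X^X$ (pointwise convergence, composition), similarly $E(Y,T)$. A semigroup is completely regular if each element $a$ admits $x$ with $a=axa$, $ax=xa$. *)

theory Defs
  imports "HOL-Analysis.Analysis"
begin

definition dyn_system :: "'x topology \<Rightarrow> ('t::monoid_mult \<Rightarrow> 'x \<Rightarrow> 'x) \<Rightarrow> bool" where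
  "dyn_system X \<alpha> \<longleftrightarrow>
     compact_space X \<and> metrizable_space X \<and>
     (\<forall>t. continuous_map X X (\<alpha> t) \<and> \<alpha> t ` topspace X = topspace X) \<and>
     (\<forall>x\<in>topspace X. \<alpha> 1 x = x) \<and>
     (\<forall>s t. \<forall>x\<in>topspace X. \<alpha> (s * t) x = \<alpha> s (\<alpha> t x))"

definition factor_map ::
  "'x topology \<Rightarrow> ('t \<Rightarrow> 'x \<Rightarrow> 'x) \<Rightarrow> 'y topology \<Rightarrow> ('t \<Rightarrow> 'y \<Rightarrow> 'y) \<Rightarrow> ('x \<Rightarrow> 'y) \<Rightarrow> bool" where
  "factor_map X \<alpha> Y \<beta> \<pi> \<longleftrightarrow>
     continuous_map X Y \<pi> \<and> \<pi> ` topspace X = topspace Y \<and>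
     (\<forall>t. \<forall>x\<in>topspace X. \<pi> (\<alpha> t x) = \<beta> t (\<pi> x))"

text \<open>Enveloping (Ellis) semigroup: closure of the maps alpha t in X^X with the
  topology of pointwise convergence (product topology); maps are represented as
  functions on topspace X, extensional outside it.\<close>
definition enveloping_semigroup :: "'x topology \<Rightarrow> ('t \<Rightarrow> 'x \<Rightarrow> 'x) \<Rightarrow> ('x \<Rightarrow> 'x) set" where
  "enveloping_semigroup X \<alpha> =
     (product_topology (\<lambda>_. X) (topspace X)) closure_of
       (range (\<lambda>t. restrict (\<alpha> t) (topspace X)))"

definition completely_regular :: "'a set \<Rightarrow> ('a \<Rightarrow> 'a \<Rightarrow> 'a) \<Rightarrow> bool" where
  "completely_regular E mul \<longleftrightarrow>
     (\<forall>a\<in>E. \<exists>x\<in>E. a = mul (mul a x) a \<and> mul a x = mul x a)"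

definition E_completely_regular :: "'x topology \<Rightarrow> ('t \<Rightarrow> 'x \<Rightarrow> 'x) \<Rightarrow> bool" where
  "E_completely_regular X \<alpha> \<longleftrightarrow>
     completely_regular (enveloping_semigroup X \<alpha>) (\<lambda>f g. compose (topspace X) f g)"

end

theory Submission
  imports Defs
begin

theorem corollary3p4:
  fixes X :: "'x topology" and Y :: "'y topology"
    and \<alpha> :: "'t::monoid_mult \<Rightarrow> 'x \<Rightarrow> 'x" and \<beta> :: "'t \<Rightarrow> 'y \<Rightarrow> 'y"
    and \<pi> :: "'x \<Rightarrow> 'y"
  assumes "dyn_system X \<alpha>" and "dyn_system Y \<beta>"
    and "factor_map X \<alpha> Y \<beta> \<pi>"
    and "E_completely_regular X \<alpha>"
  shows "E_completely_regular Y \<beta>"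
proof -
  define PX where "PX = product_topology (\<lambda>_. X) (topspace X)"
  define PY where "PY = product_topology (\<lambda>_. Y) (topspace Y)"
  define EEX where "EEX = enveloping_semigroup X \<alpha>"
  define EEY where "EEY = enveloping_semigroup Y \<beta>"
  have EEXd: "EEX = PX closure_of range (\<lambda>t. restrict (\<alpha> t) (topspace X))"
    by (simp add: EEX_def PX_def enveloping_semigroup_def)
  have EEYd: "EEY = PY closure_of range (\<lambda>t. restrict (\<beta> t) (topspace Y))"
    by (simp add: EEY_def PY_def enveloping_semigroup_def)
  have cX: "compact_space X" and cY: "compact_space Y" and HY: "Hausdorff_space Y"
    using assms(1,2) unfolding dyn_system_def by (simp_all add: metrizable_imp_Hausdorff_space)
  have pic: "continuous_map X Y \<pi>" and pis: "\<pi> ` topspace X = topspace Y"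
    and picomm: "\<And>t x. x \<in> topspace X \<Longrightarrow> \<pi> (\<alpha> t x) = \<beta> t (\<pi> x)"
    using assms(3) unfolding factor_map_def by simp_all
  have aX: "\<And>t x. x \<in> topspace X \<Longrightarrow> \<alpha> t x \<in> topspace X"
  proof -
    fix t x assume "x \<in> topspace X"
    moreover have "continuous_map X X (\<alpha> t)" using assms(1) unfolding dyn_system_def by simp
    ultimately show "\<alpha> t x \<in> topspace X" by (meson continuous_map_image_subset_topspace image_subset_iff)
  qed
  have projc: "continuous_map PX Y (\<lambda>p. \<pi> (p k))" if "k \<in> topspace X" for k
  proof -
    have "continuous_map PX X (\<lambda>p. p k)"
      unfolding PX_def using continuous_map_product_projection[of k "topspace X" "\<lambda>_. X"] that by simp
    then show ?thesis using continuous_map_compose[OF _ pic] by (simp add: o_def)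
  qed
  have tPX: "topspace PX = (\<Pi>\<^sub>E i\<in>topspace X. topspace X)"
    by (simp add: PX_def)
  have tPY: "topspace PY = (\<Pi>\<^sub>E i\<in>topspace Y. topspace Y)"
    by (simp add: PY_def)
  have EXsub: "EEX \<subseteq> topspace PX" unfolding EEXd by (rule closure_of_subset_topspace)
  have EXpi: "p \<in> (\<Pi>\<^sub>E i\<in>topspace X. topspace X)" if "p \<in> EEX" for p
  proof -
    have "p \<in> topspace PX" using EXsub that by (rule subsetD)
    then show ?thesis unfolding tPX .
  qed
  have EXin: "\<And>p x. p \<in> EEX \<Longrightarrow> x \<in> topspace X \<Longrightarrow> p x \<in> topspace X"
    using EXpi PiE_mem by fast
  have compat: "\<pi> (p x) = \<pi> (p x')"
    if p: "p \<in> EEX" and x: "x \<in> topspace X" and x': "x' \<in> topspace X" and e: "\<pi> x = \<pi> x'" for p x x'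
  proof -
    let ?C = "{q \<in> topspace PX. \<pi> (q x) = \<pi> (q x')}"
    have "closedin PX ?C"
      by (rule closedin_continuous_maps_eq[OF HY projc[OF x] projc[OF x']])
    moreover have "range (\<lambda>t. restrict (\<alpha> t) (topspace X)) \<subseteq> ?C"
      using x x' e aX by (auto simp: tPX picomm)
    ultimately have "EEX \<subseteq> ?C" unfolding EEXd by (rule closure_of_minimal[rotated])
    then show ?thesis using p by auto
  qed
  define s where "s y = (SOME x. x \<in> topspace X \<and> \<pi> x = y)" for y
  have s: "\<And>y. y \<in> topspace Y \<Longrightarrow> s y \<in> topspace X \<and> \<pi> (s y) = y"
  proof -
    fix y assume "y \<in> topspace Y"
    then have "y \<in> \<pi> ` topspace X" unfolding pis .
    then have "\<exists>x. x \<in> topspace X \<and> \<pi> x = y" by (auto simp: image_iff)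
    then show "s y \<in> topspace X \<and> \<pi> (s y) = y" unfolding s_def by (rule someI_ex)
  qed
  define \<theta> where "\<theta> p = restrict (\<lambda>y. \<pi> (p (s y))) (topspace Y)" for p :: "'x \<Rightarrow> 'x"
  have thc: "continuous_map PX PY \<theta>"
    unfolding PY_def
  proof (subst continuous_map_componentwise, intro conjI ballI)
    show "\<theta> ` topspace PX \<subseteq> extensional (topspace Y)" by (auto simp: \<theta>_def)
    fix k assume k: "k \<in> topspace Y"
    have "continuous_map PX Y (\<lambda>p. \<pi> (p (s k)))"
      by (rule projc) (rule conjunct1[OF s[OF k]])
    then show "continuous_map PX Y (\<lambda>x. \<theta> x k)"
      by (simp add: \<theta>_def k)
  qed
  have thal: "\<theta> (restrict (\<alpha> t) (topspace X)) = restrict (\<beta> t) (topspace Y)" for t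
    by (rule ext) (auto simp: \<theta>_def s picomm)
  have thEX: "\<theta> ` EEX \<subseteq> EEY"
  proof -
    have "\<theta> ` EEX \<subseteq> PY closure_of (\<theta> ` range (\<lambda>t. restrict (\<alpha> t) (topspace X)))"
      unfolding EEXd by (rule continuous_map_image_closure_subset[OF thc])
    also have "\<theta> ` range (\<lambda>t. restrict (\<alpha> t) (topspace X)) = range (\<lambda>t. restrict (\<beta> t) (topspace Y))"
      using thal by (auto simp: image_image)
    finally show ?thesis using EEYd by simp
  qed
  have EYth: "EEY \<subseteq> \<theta> ` EEX"
  proof -
    have "compact_space PX" unfolding PX_def
      by (simp add: compact_space_product_topology cX)
    moreover have "closedin PX EEX" unfolding EEXd by simp
    ultimately have "compactin PX EEX" by (rule closedin_compact_space)
    then have "compactin PY (\<theta> ` EEX)" by (rule image_compactin[OF _ thc])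
    moreover have "Hausdorff_space PY" unfolding PY_def
      by (simp add: Hausdorff_space_product_topology HY)
    ultimately have cl: "closedin PY (\<theta> ` EEX)" using compactin_imp_closedin by blast
    have "range (\<lambda>t. restrict (\<alpha> t) (topspace X)) \<subseteq> EEX"
      unfolding EEXd by (rule closure_of_subset) (use aX in \<open>auto simp: PX_def\<close>)
    then have "range (\<lambda>t. restrict (\<beta> t) (topspace Y)) \<subseteq> \<theta> ` EEX"
    proof -
      have "range (\<lambda>t. restrict (\<beta> t) (topspace Y)) = \<theta> ` range (\<lambda>t. restrict (\<alpha> t) (topspace X))"
        using thal by (simp add: image_image)
      then show ?thesis using \<open>range (\<lambda>t. restrict (\<alpha> t) (topspace X)) \<subseteq> EEX\<close> by (simp add: image_mono)
    qed
    then show ?thesis unfolding EEYd by (rule closure_of_minimal[OF _ cl])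
  qed
  define F where "F p \<longleftrightarrow> (\<forall>z\<in>topspace X. p z \<in> topspace X) \<and>
      (\<forall>z\<in>topspace X. \<forall>z'\<in>topspace X. \<pi> z = \<pi> z' \<longrightarrow> \<pi> (p z) = \<pi> (p z'))" for p
  have FE: "F p" if "p \<in> EEX" for p
    unfolding F_def
  proof (intro conjI ballI impI)
    fix z assume "z \<in> topspace X" then show "p z \<in> topspace X" by (rule EXin[OF that])
  next
    fix z z' assume "z \<in> topspace X" "z' \<in> topspace X" "\<pi> z = \<pi> z'"
    then show "\<pi> (p z) = \<pi> (p z')" by (rule compat[OF that])
  qed
  have Fc: "F (compose (topspace X) p q)" if "F p" "F q" for p q
  proof -
    have p1: "\<And>z. z \<in> topspace X \<Longrightarrow> p z \<in> topspace X"
      and p2: "\<And>z z'. z \<in> topspace X \<Longrightarrow> z' \<in> topspace X \<Longrightarrow> \<pi> z = \<pi> z' \<Longrightarrow> \<pi> (p z) = \<pi> (p z')"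
      using that(1) unfolding F_def by blast+
    have q1: "\<And>z. z \<in> topspace X \<Longrightarrow> q z \<in> topspace X"
      and q2: "\<And>z z'. z \<in> topspace X \<Longrightarrow> z' \<in> topspace X \<Longrightarrow> \<pi> z = \<pi> z' \<Longrightarrow> \<pi> (q z) = \<pi> (q z')"
      using that(2) unfolding F_def by blast+
    show ?thesis unfolding F_def
    proof (intro conjI ballI impI)
      fix z assume z: "z \<in> topspace X"
      show "compose (topspace X) p q z \<in> topspace X" using z p1 q1 by (simp add: compose_def)
    next
      fix z z' assume z: "z \<in> topspace X" "z' \<in> topspace X" "\<pi> z = \<pi> z'"
      have "\<pi> (q z) = \<pi> (q z')" using q2 z by blast
      then have "\<pi> (p (q z)) = \<pi> (p (q z'))" using p2 q1 z by blast
      then show "\<pi> (compose (topspace X) p q z) = \<pi> (compose (topspace X) p q z')"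
        using z by (simp add: compose_def)
    qed
  qed
  have hom: "\<theta> (compose (topspace X) p q) = compose (topspace Y) (\<theta> p) (\<theta> q)"
    if p: "F p" and q: "F q" for p q
  proof (rule ext)
    fix y
    show "\<theta> (compose (topspace X) p q) y = compose (topspace Y) (\<theta> p) (\<theta> q) y"
    proof (cases "y \<in> topspace Y")
      case True
      have sy: "s y \<in> topspace X" using s[OF True] by (rule conjunct1)
      have qs: "q (s y) \<in> topspace X" using q sy unfolding F_def by blast
      have piq: "\<pi> (q (s y)) \<in> topspace Y" using pic qs by (meson continuous_map_image_subset_topspace image_subset_iff)
      have s2: "s (\<pi> (q (s y))) \<in> topspace X \<and> \<pi> (s (\<pi> (q (s y)))) = \<pi> (q (s y))"
        by (rule s[OF piq])
      have "\<pi> (p (q (s y))) = \<pi> (p (s (\<pi> (q (s y)))))"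
      proof -
        have p2: "\<And>z z'. z \<in> topspace X \<Longrightarrow> z' \<in> topspace X \<Longrightarrow> \<pi> z = \<pi> z' \<Longrightarrow> \<pi> (p z) = \<pi> (p z')"
          using p unfolding F_def by blast
        show ?thesis by (rule p2[OF qs conjunct1[OF s2] conjunct2[OF s2, symmetric]])
      qed
      then show ?thesis using True sy piq by (simp add: \<theta>_def compose_def)
    qed (simp add: \<theta>_def compose_def)
  qed
  show ?thesis
    unfolding E_completely_regular_def completely_regular_def
  proof (fold EEY_def, intro ballI)
    fix b assume b: "b \<in> EEY"
    then obtain a where a: "a \<in> EEX" and ba: "b = \<theta> a" using EYth by blast
    have cr: "\<forall>a\<in>EEX. \<exists>x\<in>EEX. a = compose (topspace X) (compose (topspace X) a x) a \<and>
                 compose (topspace X) a x = compose (topspace X) x a"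
      using assms(4) unfolding E_completely_regular_def completely_regular_def EEX_def .
    then obtain x where x: "x \<in> EEX" and e1: "a = compose (topspace X) (compose (topspace X) a x) a"
      and e2: "compose (topspace X) a x = compose (topspace X) x a" using a by blast
    have Fa: "F a" and Fx: "F x" using FE a x by auto
    have "\<theta> a = compose (topspace Y) (compose (topspace Y) (\<theta> a) (\<theta> x)) (\<theta> a)"
    proof -
      have "\<theta> a = \<theta> (compose (topspace X) (compose (topspace X) a x) a)" using e1 by (rule arg_cong)
      also have "\<dots> = compose (topspace Y) (\<theta> (compose (topspace X) a x)) (\<theta> a)"
        by (rule hom[OF Fc[OF Fa Fx] Fa])
      also have "\<theta> (compose (topspace X) a x) = compose (topspace Y) (\<theta> a) (\<theta> x)"
        by (rule hom[OF Fa Fx])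
      finally show ?thesis .
    qed
    moreover have "compose (topspace Y) (\<theta> a) (\<theta> x) = compose (topspace Y) (\<theta> x) (\<theta> a)"
    proof -
      have "compose (topspace Y) (\<theta> a) (\<theta> x) = \<theta> (compose (topspace X) a x)"
        by (rule hom[OF Fa Fx, symmetric])
      also have "\<dots> = \<theta> (compose (topspace X) x a)" using e2 by (rule arg_cong)
      also have "\<dots> = compose (topspace Y) (\<theta> x) (\<theta> a)" by (rule hom[OF Fx Fa])
      finally show ?thesis .
    qed
    moreover have "\<theta> x \<in> EEY" using thEX x by blast
    ultimately show "\<exists>x\<in>EEY. b = compose (topspace Y) (compose (topspace Y) b x) b \<and>
            compose (topspace Y) b x = compose (topspace Y) x b"
      using ba by blast
  qed
qed

end
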